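(* In the setting of the context, assume $\|X_\tau\|_2\le x_{\max}$ for all $\tau$. Let $\delta\in(0,1)$ and $\lambda=\sigma x_{\max}\sqrt{\frac{2[\log(2/\delta)+\log d]}{t}}$. Then with probability at least $1-\delta$, $$|v_t(\hat\beta_t)-v_t(\beta^* )|\le\lambda\|\hat\beta_t-\beta^*\|_1.$$
   Context: Setting: $\beta^*\in\mathbb{R}^d$; a filtration $(\tilde{\mathcal{F}}_\tau)$ such that $X_\tau\in\mathbb{R}^d$ is $\tilde{\mathcal{F}}_{\tau-1}$-measurable and $Y_\tau=\mu(X_\tau^\top\beta^* )+\epsilon_\tau$, with $\epsilon_\tau$ $\tilde{\mathcal{F}}_\tau$-measurable and $\mathbb{E}[e^{\alpha\epsilon_\tau}\mid\tilde{\mathcal{F}}_{\tau-1}]\le e^{\alpha^2\sigma^2/2}$ for all $\alpha$. $m$ is convex with $\dot m=\mu$; $\ell_t(\beta)=-\frac1t\sum_{\tau=1}^t[Y_\tau X_\tau^\top\beta-m(X_\tau^\top\beta)]$; $\bar\ell_t(\beta)=-\frac1t\sum_{\tau=1}^t[\mu(X_\tau^\top\beta^* )X_\tau^\top\beta-m(X_\tau^\top\beta)]$ (the expectation of $\ell_t$ over the responses); the empirical process is $v_t(\beta)=\ell_t(\beta)-\bar\ell_t(\beta)$. $\hat\beta_t\in\arg\min_\beta\{\ell_t(\beta)+\lambda_t\|\beta\|_1\}$ is a Lasso estimate for some $\lambda_t>0$. *)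

theory Defs
  imports "HOL-Probability.Probability"
begin

definition l1norm :: "real^'d \<Rightarrow> real" where
  "l1norm x = (\<Sum>i\<in>UNIV. \<bar>x $ i\<bar>)"

definition glm_loss :: "(real \<Rightarrow> real) \<Rightarrow> nat \<Rightarrow> (nat \<Rightarrow> real^'d) \<Rightarrow> (nat \<Rightarrow> real)
    \<Rightarrow> real^'d \<Rightarrow> real" where
  "glm_loss m t X Y \<beta> =
     - (1 / real t) * (\<Sum>\<tau>=1..t. Y \<tau> * (X \<tau> \<bullet> \<beta>) - m (X \<tau> \<bullet> \<beta>))"

definition glm_loss_bar :: "(real \<Rightarrow> real) \<Rightarrow> (real \<Rightarrow> real) \<Rightarrow> real^'d \<Rightarrow> nat
    \<Rightarrow> (nat \<Rightarrow> real^'d) \<Rightarrow> real^'d \<Rightarrow> real" where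
  "glm_loss_bar m \<mu> \<beta>s t X \<beta> =
     - (1 / real t) * (\<Sum>\<tau>=1..t. \<mu> (X \<tau> \<bullet> \<beta>s) * (X \<tau> \<bullet> \<beta>) - m (X \<tau> \<bullet> \<beta>))"

definition emp_proc :: "(real \<Rightarrow> real) \<Rightarrow> (real \<Rightarrow> real) \<Rightarrow> real^'d \<Rightarrow> nat
    \<Rightarrow> (nat \<Rightarrow> real^'d) \<Rightarrow> (nat \<Rightarrow> real) \<Rightarrow> real^'d \<Rightarrow> real" where
  "emp_proc m \<mu> \<beta>s t X Y \<beta> = glm_loss m t X Y \<beta> - glm_loss_bar m \<mu> \<beta>s t X \<beta>"

end

theory Submission
  imports Defs
begin

lemma cond_nn_bound:
  fixes g :: "'a \<Rightarrow> real"
  assumes M: "prob_space M" and sub: "subalgebra M G"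
    and gi: "integrable M g" and gpos: "\<And>x. g x \<ge> 0"
    and bnd: "AE x in M. real_cond_exp M G g x \<le> C"
  shows "AE x in M. nn_cond_exp M G (\<lambda>x. ennreal (g x)) x \<le> ennreal C"
proof -
  interpret prob_space M by (rule M)
  interpret finite_measure_subalgebra M G by unfold_locales (rule sub)
  have gm[measurable]: "g \<in> borel_measurable M" using gi by auto
  have "(\<lambda>x. ennreal (- g x)) = (\<lambda>x. 0)" using gpos by (simp add: ennreal_neg)
  moreover have "AE x in M. 0 = nn_cond_exp M G (\<lambda>x. 0) x"
    by (rule nn_cond_exp_F_meas, auto)
  ultimately have z: "AE x in M. nn_cond_exp M G (\<lambda>x. ennreal(-g x)) x = 0" by simp
  have "(\<integral>\<^sup>+ x. 1 * nn_cond_exp M G (\<lambda>x. ennreal (g x)) x \<partial>M) = (\<integral>\<^sup>+ x. 1 * ennreal (g x) \<partial>M)"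
    by (rule nn_cond_exp_intg) auto
  also have "\<dots> < \<infinity>" using gi gpos
    by (simp add: integrable_iff_bounded)
  finally have "(\<integral>\<^sup>+ x. nn_cond_exp M G (\<lambda>x. ennreal (g x)) x \<partial>M) \<noteq> \<infinity>" by simp
  hence fin: "AE x in M. nn_cond_exp M G (\<lambda>x. ennreal (g x)) x \<noteq> \<infinity>"
    by (intro nn_integral_noteq_infinite) auto
  show ?thesis using z fin bnd
  proof eventually_elim
    case (elim x)
    then have "real_cond_exp M G g x = enn2real (nn_cond_exp M G (\<lambda>x. ennreal (g x)) x)"
      unfolding real_cond_exp_def by simp
    have "nn_cond_exp M G (\<lambda>x. ennreal (g x)) x = ennreal (enn2real (nn_cond_exp M G (\<lambda>x. ennreal (g x)) x))"
      using elim by (simp add: less_top)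
    also have "\<dots> \<le> ennreal C" using elim \<open>real_cond_exp M G g x = _\<close> by (intro ennreal_leI) simp
    finally show ?case .
  qed
qed

lemma cond_intg_bound:
  fixes g :: "'a \<Rightarrow> real" and W :: "'a \<Rightarrow> ennreal"
  assumes M: "prob_space M" and sub: "subalgebra M G"
    and Wm: "W \<in> borel_measurable G"
    and gi: "integrable M g" and gpos: "\<And>x. g x \<ge> 0"
    and bnd: "AE x in M. real_cond_exp M G g x \<le> C"
  shows "(\<integral>\<^sup>+ x. W x * ennreal (g x) \<partial>M) \<le> ennreal C * (\<integral>\<^sup>+ x. W x \<partial>M)"
proof -
  interpret prob_space M by (rule M)
  interpret finite_measure_subalgebra M G by unfold_locales (rule sub)
  have gm[measurable]: "g \<in> borel_measurable M" using gi by auto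
  have Wm'[measurable]: "W \<in> borel_measurable M" by (rule measurable_from_subalg[OF sub Wm])
  have "(\<integral>\<^sup>+ x. W x * ennreal (g x) \<partial>M) = (\<integral>\<^sup>+ x. W x * nn_cond_exp M G (\<lambda>x. ennreal (g x)) x \<partial>M)"
    by (rule nn_cond_exp_intg[symmetric]) (auto simp: Wm)
  also have "\<dots> \<le> (\<integral>\<^sup>+ x. W x * ennreal C \<partial>M)"
    using cond_nn_bound[OF M sub gi gpos bnd]
    by (intro nn_integral_mono_AE) (auto elim!: eventually_mono intro: mult_left_mono)
  also have "\<dots> = ennreal C * (\<integral>\<^sup>+ x. W x \<partial>M)"
    by (subst nn_integral_multc) (auto simp: mult.commute)
  finally show ?thesis .
qed

lemma exp_cvx_bound:
  fixes c z e :: real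
  assumes "c > 0" "\<bar>z\<bar> \<le> c"
  shows "exp (z * e) \<le> (c - z) / (2*c) * exp (- c * e) + (c + z) / (2*c) * exp (c * e)"
proof -
  define u where "u = (c + z) / (2*c)"
  have u0: "0 \<le> u" "u \<le> 1" using assms by (auto simp: u_def field_simps)
  have "exp ((1 - u) * (- c * e) + u * (c * e)) \<le> (1 - u) * exp (- c * e) + u * exp (c * e)"
    using convex_onD[OF exp_convex, of u "- c * e" "c * e"] u0 by simp
  moreover have "(1 - u) * (- c * e) + u * (c * e) = z * e" using assms by (simp add: u_def field_simps)
  moreover have "1 - u = (c - z) / (2*c)" using assms by (simp add: u_def field_simps)
  ultimately show ?thesis by (simp add: u_def)
qed

lemma mgf_step:
  fixes W Z e :: "'a \<Rightarrow> real"
  assumes M: "prob_space M" and sub: "subalgebra M G"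
    and Wm[measurable]: "W \<in> borel_measurable G" and Wpos: "\<And>x. W x \<ge> 0"
    and Zm[measurable]: "Z \<in> borel_measurable G" and Zb: "\<And>x. \<bar>Z x\<bar> \<le> c"
    and em[measurable]: "e \<in> borel_measurable M"
    and i1: "integrable M (\<lambda>x. exp (c * e x))" and i2: "integrable M (\<lambda>x. exp (- c * e x))"
    and b1: "AE x in M. real_cond_exp M G (\<lambda>x. exp (c * e x)) x \<le> K"
    and b2: "AE x in M. real_cond_exp M G (\<lambda>x. exp (- c * e x)) x \<le> K"
    and K1: "K \<ge> 1"
  shows "(\<integral>\<^sup>+ x. ennreal (W x * exp (Z x * e x)) \<partial>M) \<le> ennreal K * (\<integral>\<^sup>+ x. ennreal (W x) \<partial>M)"
proof (cases "c > 0")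
  case False
  then have "\<And>x. Z x = 0" using Zb by (metis abs_ge_zero abs_le_zero_iff order.trans not_less)
  then have "(\<integral>\<^sup>+ x. ennreal (W x * exp (Z x * e x)) \<partial>M) = 1 * (\<integral>\<^sup>+ x. ennreal (W x) \<partial>M)" by simp
  also have "\<dots> \<le> ennreal K * (\<integral>\<^sup>+ x. ennreal (W x) \<partial>M)"
    using K1 by (intro mult_right_mono) auto
  finally show ?thesis .
next
  case True
  have Wm'[measurable]: "W \<in> borel_measurable M" by (rule measurable_from_subalg[OF sub Wm])
  have Zm'[measurable]: "Z \<in> borel_measurable M" by (rule measurable_from_subalg[OF sub Zm])
  define a where "a = (\<lambda>x. ennreal (W x * ((c - Z x) / (2*c))))"
  define b where "b = (\<lambda>x. ennreal (W x * ((c + Z x) / (2*c))))"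
  have am[measurable]: "a \<in> borel_measurable G" unfolding a_def by measurable
  have bm[measurable]: "b \<in> borel_measurable G" unfolding b_def by measurable
  have am'[measurable]: "a \<in> borel_measurable M" by (rule measurable_from_subalg[OF sub am])
  have bm'[measurable]: "b \<in> borel_measurable M" by (rule measurable_from_subalg[OF sub bm])
  have ca: "\<And>x. (c - Z x) / (2*c) \<ge> 0" "\<And>x. (c + Z x) / (2*c) \<ge> 0"
    using Zb True by (auto simp: abs_le_iff intro!: divide_nonneg_pos) (smt (verit) Zb abs_le_iff)+
  have pab: "\<And>x. W x * ((c - Z x) / (2*c)) \<ge> 0" "\<And>x. W x * ((c + Z x) / (2*c)) \<ge> 0"
    using Wpos ca by (intro mult_nonneg_nonneg; simp)+
  have pt: "ennreal (W x * exp (Z x * e x)) \<le> a x * ennreal (exp (- c * e x)) + b x * ennreal (exp (c * e x))" for x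
  proof -
    have "W x * exp (Z x * e x) \<le> W x * ((c - Z x) / (2*c) * exp (- c * e x) + (c + Z x) / (2*c) * exp (c * e x))"
      using exp_cvx_bound[OF True Zb[of x], of "e x"] Wpos[of x] by (intro mult_left_mono) auto
    also have "\<dots> = (W x * ((c - Z x) / (2*c))) * exp (- c * e x) + (W x * ((c + Z x) / (2*c))) * exp (c * e x)"
      by (simp add: algebra_simps)
    finally have "ennreal (W x * exp (Z x * e x)) \<le> ennreal ((W x * ((c - Z x) / (2*c))) * exp (- c * e x) + (W x * ((c + Z x) / (2*c))) * exp (c * e x))"
      by (rule ennreal_leI)
    also have "\<dots> = a x * ennreal (exp (- c * e x)) + b x * ennreal (exp (c * e x))"
    proof -
      have p1: "W x * ((c - Z x) / (2*c)) \<ge> 0" "W x * ((c + Z x) / (2*c)) \<ge> 0"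
        using Wpos[of x] ca[of x] by (intro mult_nonneg_nonneg; simp)+
      have p2: "exp (- c * e x) \<ge> 0" "exp (c * e x) \<ge> 0" by simp_all
      show ?thesis unfolding a_def b_def
        by (simp only: ennreal_plus[OF mult_nonneg_nonneg[OF p1(1) p2(1)] mult_nonneg_nonneg[OF p1(2) p2(2)]]
            ennreal_mult[OF p1(1) p2(1)] ennreal_mult[OF p1(2) p2(2)])
    qed
    finally show ?thesis .
  qed
  have "(\<integral>\<^sup>+ x. ennreal (W x * exp (Z x * e x)) \<partial>M) \<le> (\<integral>\<^sup>+ x. a x * ennreal (exp (- c * e x)) + b x * ennreal (exp (c * e x)) \<partial>M)"
    by (intro nn_integral_mono pt)
  also have "\<dots> = (\<integral>\<^sup>+ x. a x * ennreal (exp (- c * e x)) \<partial>M) + (\<integral>\<^sup>+ x. b x * ennreal (exp (c * e x)) \<partial>M)"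
    by (rule nn_integral_add) auto
  also have "\<dots> \<le> ennreal K * (\<integral>\<^sup>+ x. a x \<partial>M) + ennreal K * (\<integral>\<^sup>+ x. b x \<partial>M)"
    by (intro add_mono cond_intg_bound[OF M sub] am bm i1 i2 b1 b2) auto
  also have "\<dots> = ennreal K * (\<integral>\<^sup>+ x. a x + b x \<partial>M)"
    by (simp add: nn_integral_add distrib_left)
  also have "(\<integral>\<^sup>+ x. a x + b x \<partial>M) = (\<integral>\<^sup>+ x. ennreal (W x) \<partial>M)"
  proof (rule nn_integral_cong)
    fix x
    have "a x + b x = ennreal (W x * ((c - Z x) / (2*c)) + W x * ((c + Z x) / (2*c)))"
      unfolding a_def b_def by (simp only: ennreal_plus[OF pab(1)[of x] pab(2)[of x]])
    also have "W x * ((c - Z x) / (2*c)) + W x * ((c + Z x) / (2*c)) = W x"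
      using True by (simp add: field_simps)
    finally show "a x + b x = ennreal (W x)" .
  qed
  finally show ?thesis .
qed

lemma vec_nth_meas: "(\<lambda>v::real^'d. v $ j) \<in> borel_measurable borel"
  by (intro borel_measurable_continuous_onI continuous_intros)

lemma emp_proc_eq:
  assumes Y: "\<And>\<tau>. Y \<tau> = \<mu> (X \<tau> \<bullet> \<beta>s) + e \<tau>"
  shows "emp_proc m \<mu> \<beta>s t X Y b = - (1 / real t) * (\<Sum>\<tau>=1..t. e \<tau> * (X \<tau> \<bullet> b))"
  unfolding emp_proc_def glm_loss_def glm_loss_bar_def
  by (simp add: Y algebra_simps sum_subtractf[symmetric] sum_distrib_left)

lemma det_bound:
  fixes X :: "nat \<Rightarrow> real^'d"
  assumes Y: "\<And>\<tau>. Y \<tau> = \<mu> (X \<tau> \<bullet> \<beta>s) + e \<tau>"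
    and S: "\<And>j. \<bar>\<Sum>\<tau>=1..t. e \<tau> * (X \<tau> $ j)\<bar> \<le> real t * lam"
    and t: "t \<ge> 1"
  shows "\<bar>emp_proc m \<mu> \<beta>s t X Y b - emp_proc m \<mu> \<beta>s t X Y \<beta>s\<bar> \<le> lam * l1norm (b - \<beta>s)"
proof -
  define D where "D = b - \<beta>s"
  have "emp_proc m \<mu> \<beta>s t X Y b - emp_proc m \<mu> \<beta>s t X Y \<beta>s
      = - (1 / real t) * (\<Sum>\<tau>=1..t. e \<tau> * (X \<tau> \<bullet> D))"
    unfolding emp_proc_eq[where Y=Y and \<mu>=\<mu> and X=X and e=e and \<beta>s=\<beta>s, OF Y] D_def
    by (simp add: inner_diff_right algebra_simps sum_subtractf)
  also have "(\<Sum>\<tau>=1..t. e \<tau> * (X \<tau> \<bullet> D)) = (\<Sum>j\<in>UNIV. D $ j * (\<Sum>\<tau>=1..t. e \<tau> * (X \<tau> $ j)))"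
    unfolding inner_vec_def
    by (simp add: sum_distrib_left sum_distrib_right algebra_simps) (rule sum.swap)
  finally have eq: "emp_proc m \<mu> \<beta>s t X Y b - emp_proc m \<mu> \<beta>s t X Y \<beta>s
      = - (1 / real t) * (\<Sum>j\<in>UNIV. D $ j * (\<Sum>\<tau>=1..t. e \<tau> * (X \<tau> $ j)))" .
  have "\<bar>\<Sum>j\<in>UNIV. D $ j * (\<Sum>\<tau>=1..t. e \<tau> * (X \<tau> $ j))\<bar> \<le> (\<Sum>j\<in>UNIV. \<bar>D $ j\<bar> * (real t * lam))"
    using S by (intro order.trans[OF sum_abs]) (auto intro!: sum_mono mult_left_mono simp: abs_mult)
  also have "\<dots> = real t * (lam * l1norm D)"
    unfolding l1norm_def by (simp add: sum_distrib_left sum_distrib_right algebra_simps)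
  finally have "\<bar>\<Sum>j\<in>UNIV. D $ j * (\<Sum>\<tau>=1..t. e \<tau> * (X \<tau> $ j))\<bar> \<le> real t * (lam * l1norm D)" .
  then show ?thesis unfolding eq D_def[symmetric] using t
    by (simp add: abs_mult field_simps)
qed

lemma markov_exp:
  fixes f :: "'a \<Rightarrow> real"
  assumes M: "prob_space M" and fm[measurable]: "f \<in> borel_measurable M" and al: "\<alpha> > 0"
  shows "emeasure M {\<omega>\<in>space M. f \<omega> \<ge> a} \<le> ennreal (exp (- \<alpha> * a)) * (\<integral>\<^sup>+ \<omega>. ennreal (exp (\<alpha> * f \<omega>)) \<partial>M)"
proof -
  have "emeasure M {\<omega>\<in>space M. f \<omega> \<ge> a} = (\<integral>\<^sup>+ \<omega>. indicator {\<omega>\<in>space M. f \<omega> \<ge> a} \<omega> \<partial>M)"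
    by (rule nn_integral_indicator[symmetric]) measurable
  also have "\<dots> \<le> (\<integral>\<^sup>+ \<omega>. ennreal (exp (- \<alpha> * a)) * ennreal (exp (\<alpha> * f \<omega>)) \<partial>M)"
  proof (rule nn_integral_mono)
    fix \<omega>
    show "indicator {\<omega>\<in>space M. f \<omega> \<ge> a} \<omega> \<le> ennreal (exp (- \<alpha> * a)) * ennreal (exp (\<alpha> * f \<omega>))"
    proof (cases "\<omega> \<in> {\<omega>\<in>space M. f \<omega> \<ge> a}")
      case True
      then have "0 \<le> \<alpha> * (f \<omega> - a)" using al by simp
      then have "1 \<le> exp (- \<alpha> * a) * exp (\<alpha> * f \<omega>)"
        by (simp add: exp_add[symmetric] algebra_simps)
      then show ?thesis using True
        by (simp add: ennreal_mult[symmetric])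
    qed simp
  qed
  also have "\<dots> = ennreal (exp (- \<alpha> * a)) * (\<integral>\<^sup>+ \<omega>. ennreal (exp (\<alpha> * f \<omega>)) \<partial>M)"
    by (rule nn_integral_cmult) measurable
  finally show ?thesis .
qed

theorem lemma4:
  fixes M :: "'a measure" and F :: "nat \<Rightarrow> 'a measure"
    and X :: "nat \<Rightarrow> 'a \<Rightarrow> real^'d" and Y \<epsilon> :: "nat \<Rightarrow> 'a \<Rightarrow> real"
    and \<beta>s :: "real^'d" and \<mu> m :: "real \<Rightarrow> real"
    and \<sigma> xmax \<delta> lam :: real and t :: nat
    and \<beta>hat :: "'a \<Rightarrow> real^'d"
  assumes M: "prob_space M"
    and filt: "filtration (space M) F"
    and subalg: "\<And>n. subalgebra M (F n)"
    and X_meas: "\<And>\<tau>. X \<tau> \<in> borel_measurable (F (\<tau> - 1))"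
    and eps_meas: "\<And>\<tau>. \<epsilon> \<tau> \<in> borel_measurable (F \<tau>)"
    and Y_def: "\<And>\<tau> \<omega>. Y \<tau> \<omega> = \<mu> (X \<tau> \<omega> \<bullet> \<beta>s) + \<epsilon> \<tau> \<omega>"
    and subg_int: "\<And>\<tau> \<alpha>. integrable M (\<lambda>\<omega>. exp (\<alpha> * \<epsilon> \<tau> \<omega>))"
    and subg: "\<And>\<tau> \<alpha>. AE \<omega> in M.
        real_cond_exp M (F (\<tau> - 1)) (\<lambda>\<omega>. exp (\<alpha> * \<epsilon> \<tau> \<omega>)) \<omega> \<le> exp (\<alpha>\<^sup>2 * \<sigma>\<^sup>2 / 2)"
    and sigma_pos: "\<sigma> > 0"
    and m_convex: "convex_on UNIV m"
    and m_deriv: "\<And>u. (m has_real_derivative \<mu> u) (at u)"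
    and X_bound: "\<And>\<tau> \<omega>. norm (X \<tau> \<omega>) \<le> xmax"
    and t_pos: "t \<ge> 1"
    and lam_pos: "lam > 0"
    and lasso: "\<And>\<omega> \<beta>. \<omega> \<in> space M \<Longrightarrow>
        glm_loss m t (\<lambda>\<tau>. X \<tau> \<omega>) (\<lambda>\<tau>. Y \<tau> \<omega>) (\<beta>hat \<omega>) + lam * l1norm (\<beta>hat \<omega>)
        \<le> glm_loss m t (\<lambda>\<tau>. X \<tau> \<omega>) (\<lambda>\<tau>. Y \<tau> \<omega>) \<beta> + lam * l1norm \<beta>"
    and delta: "0 < \<delta>" "\<delta> < 1"
  shows "\<exists>A \<in> sets M. prob_space.prob M A \<ge> 1 - \<delta> \<and>
    (\<forall>\<omega>\<in>A.
      \<bar>emp_proc m \<mu> \<beta>s t (\<lambda>\<tau>. X \<tau> \<omega>) (\<lambda>\<tau>. Y \<tau> \<omega>) (\<beta>hat \<omega>)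
       - emp_proc m \<mu> \<beta>s t (\<lambda>\<tau>. X \<tau> \<omega>) (\<lambda>\<tau>. Y \<tau> \<omega>) \<beta>s\<bar>
      \<le> \<sigma> * xmax * sqrt (2 * (ln (2 / \<delta>) + ln (real CARD('d))) / real t)
         * l1norm (\<beta>hat \<omega> - \<beta>s))"
proof -
  interpret prob_space M by (rule M)
  have spF: "space (F n) = space M" for n using subalg[of n] unfolding subalgebra_def by simp
  have subFF: "subalgebra (F k) (F j)" if "j \<le> k" for j k
    unfolding subalgebra_def using filtration.sets_F_mono[OF filt that] by (simp add: spF)
  have Xj_F: "(\<lambda>\<omega>. X \<tau> \<omega> $ j) \<in> borel_measurable (F k)" if "\<tau> - 1 \<le> k" for \<tau> j k
    by (rule measurable_from_subalg[OF subFF[OF that] measurable_compose[OF X_meas vec_nth_meas]])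
  have e_F: "\<epsilon> \<tau> \<in> borel_measurable (F k)" if "\<tau> \<le> k" for \<tau> k
    by (rule measurable_from_subalg[OF subFF[OF that] eps_meas])
  have xmax0: "xmax \<ge> 0" using X_bound[of 0 undefined] norm_ge_zero order.trans by blast
  define lam' where "lam' = \<sigma> * xmax * sqrt (2 * (ln (2 / \<delta>) + ln (real CARD('d))) / real t)"
  define S where "S j k \<omega> = (\<Sum>\<tau>=1..k. \<epsilon> \<tau> \<omega> * (X \<tau> \<omega> $ j))" for j k \<omega>
  have S_F: "S j k \<in> borel_measurable (F k)" for j k
    unfolding S_def by (intro borel_measurable_sum borel_measurable_times Xj_F e_F) auto
  have S_M[measurable]: "S j k \<in> borel_measurable M" for j k
    by (rule measurable_from_subalg[OF subalg S_F])
  show ?thesis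
  proof (cases "xmax = 0")
    case True
    then have X0: "X \<tau> \<omega> = 0" for \<tau> \<omega> using X_bound[of \<tau> \<omega>] by simp
    show ?thesis
    proof (intro bexI[of _ "space M"] conjI ballI)
      show "1 - \<delta> \<le> prob (space M)" using delta prob_space.prob_space[OF M] by simp
      fix \<omega> assume "\<omega> \<in> space M"
      show "\<bar>emp_proc m \<mu> \<beta>s t (\<lambda>\<tau>. X \<tau> \<omega>) (\<lambda>\<tau>. Y \<tau> \<omega>) (\<beta>hat \<omega>)
       - emp_proc m \<mu> \<beta>s t (\<lambda>\<tau>. X \<tau> \<omega>) (\<lambda>\<tau>. Y \<tau> \<omega>) \<beta>s\<bar>
      \<le> \<sigma> * xmax * sqrt (2 * (ln (2 / \<delta>) + ln (real CARD('d))) / real t)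
         * l1norm (\<beta>hat \<omega> - \<beta>s)"
        using det_bound[where X="\<lambda>\<tau>. X \<tau> \<omega>" and Y="\<lambda>\<tau>. Y \<tau> \<omega>" and e="\<lambda>\<tau>. \<epsilon> \<tau> \<omega>" and \<mu>=\<mu>
            and \<beta>s=\<beta>s and t=t and lam=0 and m=m and b="\<beta>hat \<omega>"] Y_def X0 t_pos True
        by simp
    qed simp
  next
    case False
    then have xpos: "xmax > 0" using xmax0 by simp
    have mgf: "(\<integral>\<^sup>+\<omega>. ennreal (exp (\<alpha> * S j k \<omega>)) \<partial>M) \<le> ennreal (exp (real k * (\<alpha>\<^sup>2 * xmax\<^sup>2 * \<sigma>\<^sup>2 / 2)))" for j k \<alpha>
    proof (induction k)
      case 0
      then show ?case by (simp add: S_def emeasure_space_1)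
    next
      case (Suc k)
      define c where "c = \<bar>\<alpha>\<bar> * xmax"
      define K where "K = exp (c\<^sup>2 * \<sigma>\<^sup>2 / 2)"
      have [measurable]: "S j k \<in> borel_measurable (F k)" by (rule S_F)
      have [measurable]: "(\<lambda>\<omega>. X (Suc k) \<omega> $ j) \<in> borel_measurable (F k)" by (rule Xj_F) simp
      have eq: "ennreal (exp (\<alpha> * S j (Suc k) \<omega>)) = ennreal (exp (\<alpha> * S j k \<omega>) * exp ((\<alpha> * X (Suc k) \<omega> $ j) * \<epsilon> (Suc k) \<omega>))" for \<omega>
        by (simp add: S_def exp_add[symmetric] algebra_simps)
      have "(\<integral>\<^sup>+\<omega>. ennreal (exp (\<alpha> * S j (Suc k) \<omega>)) \<partial>M)
          = (\<integral>\<^sup>+\<omega>. ennreal (exp (\<alpha> * S j k \<omega>) * exp ((\<alpha> * X (Suc k) \<omega> $ j) * \<epsilon> (Suc k) \<omega>)) \<partial>M)"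
        by (simp only: eq)
      also have "\<dots> \<le> ennreal K * (\<integral>\<^sup>+\<omega>. ennreal (exp (\<alpha> * S j k \<omega>)) \<partial>M)"
      proof (rule mgf_step[OF M subalg[of k]])
        show "(\<lambda>\<omega>. exp (\<alpha> * S j k \<omega>)) \<in> borel_measurable (F k)" by measurable
        show "(\<lambda>\<omega>. \<alpha> * X (Suc k) \<omega> $ j) \<in> borel_measurable (F k)" by measurable
        show "\<bar>\<alpha> * X (Suc k) \<omega> $ j\<bar> \<le> c" for \<omega>
          unfolding c_def abs_mult
          by (intro mult_left_mono order.trans[OF component_le_norm_cart X_bound]) auto
        show "\<epsilon> (Suc k) \<in> borel_measurable M"
          by (rule measurable_from_subalg[OF subalg eps_meas])
        show "integrable M (\<lambda>x. exp (c * \<epsilon> (Suc k) x))" by (rule subg_int)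
        show "integrable M (\<lambda>x. exp (- c * \<epsilon> (Suc k) x))" by (rule subg_int)
        show "AE x in M. real_cond_exp M (F k) (\<lambda>x. exp (c * \<epsilon> (Suc k) x)) x \<le> K"
          using subg[of "Suc k" c] unfolding K_def by simp
        show "AE x in M. real_cond_exp M (F k) (\<lambda>x. exp (- c * \<epsilon> (Suc k) x)) x \<le> K"
          using subg[of "Suc k" "- c"] unfolding K_def by simp
        show "1 \<le> K" unfolding K_def by simp
      qed simp
      also have "\<dots> \<le> ennreal K * ennreal (exp (real k * (\<alpha>\<^sup>2 * xmax\<^sup>2 * \<sigma>\<^sup>2 / 2)))"
        by (intro mult_left_mono Suc.IH) simp
      also have "\<dots> = ennreal (exp (real (Suc k) * (\<alpha>\<^sup>2 * xmax\<^sup>2 * \<sigma>\<^sup>2 / 2)))"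
        unfolding K_def c_def
        by (simp add: ennreal_mult[symmetric] exp_add[symmetric] power_mult_distrib algebra_simps)
      finally show ?case .
    qed
    define L where "L = ln (2 / \<delta>) + ln (real CARD('d))"
    define K2 where "K2 = xmax\<^sup>2 * \<sigma>\<^sup>2"
    define \<alpha>0 where "\<alpha>0 = lam' / K2"
    define a where "a = real t * lam'"
    have dpos: "real CARD('d) > 0" by simp
    have L0: "L \<ge> 0" unfolding L_def using delta by (intro add_nonneg_nonneg) (auto simp: ln_ge_zero_iff)
    have K2pos: "K2 > 0" unfolding K2_def using xpos sigma_pos by simp
    have tpos: "real t > 0" using t_pos by simp
    have Lpos: "L > 0"
    proof -
      have "2 / \<delta> > 1" using delta by (simp add: field_simps)
      then have "ln (2 / \<delta>) > 0" by (intro ln_gt_zero) auto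
      moreover have "ln (real CARD('d)) \<ge> 0" using dpos by (simp add: ln_ge_zero_iff)
      ultimately show ?thesis unfolding L_def by linarith
    qed
    have lampos: "lam' > 0" unfolding lam'_def L_def[symmetric] using sigma_pos xpos tpos Lpos
      by (intro mult_pos_pos real_sqrt_gt_zero divide_pos_pos) auto
    have lamsq: "lam'\<^sup>2 = K2 * (2 * L / real t)"
      unfolding lam'_def L_def[symmetric] K2_def using L0 tpos
      by (simp add: power_mult_distrib)
    have al0: "\<alpha>0 > 0" unfolding \<alpha>0_def using lampos K2pos by simp
    have expo: "- \<alpha>0 * a + real t * (\<alpha>0\<^sup>2 * xmax\<^sup>2 * \<sigma>\<^sup>2 / 2) = - L"
    proof -
      have "- \<alpha>0 * a + real t * (\<alpha>0\<^sup>2 * xmax\<^sup>2 * \<sigma>\<^sup>2 / 2) = - real t * lam'\<^sup>2 / (2 * K2)"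
        unfolding \<alpha>0_def a_def K2_def using xpos sigma_pos by (simp add: field_simps power2_eq_square)
      also have "\<dots> = - L" using lamsq tpos K2pos by (simp add: field_simps)
      finally show ?thesis .
    qed
    have eL: "exp (- L) = \<delta> / (2 * real CARD('d))"
      unfolding L_def using delta dpos by (simp add: exp_minus exp_add exp_diff field_simps)
    define Bs where "Bs p = {\<omega>\<in>space M. (if snd p then S (fst p) t \<omega> else - S (fst p) t \<omega>) \<ge> a}" for p :: "'d \<times> bool"
    have Bs_sets: "Bs p \<in> sets M" for p unfolding Bs_def by measurable
    have Bs_bnd: "prob (Bs p) \<le> \<delta> / (2 * real CARD('d))" for p
    proof -
      obtain j s where p: "p = (j, s)" by fastforce
      define f where "f \<omega> = (if s then S j t \<omega> else - S j t \<omega>)" for \<omega>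
      have [measurable]: "f \<in> borel_measurable M" unfolding f_def by measurable
      have "emeasure M (Bs p) = emeasure M {\<omega>\<in>space M. f \<omega> \<ge> a}" unfolding Bs_def p f_def by simp
      also have "\<dots> \<le> ennreal (exp (- \<alpha>0 * a)) * (\<integral>\<^sup>+ \<omega>. ennreal (exp (\<alpha>0 * f \<omega>)) \<partial>M)"
        by (rule markov_exp[OF M _ al0]) measurable
      also have "(\<integral>\<^sup>+ \<omega>. ennreal (exp (\<alpha>0 * f \<omega>)) \<partial>M) \<le> ennreal (exp (real t * (\<alpha>0\<^sup>2 * xmax\<^sup>2 * \<sigma>\<^sup>2 / 2)))"
      proof (cases s)
        case True then show ?thesis unfolding f_def using mgf[of \<alpha>0 j t] by simp
      next
        case False then show ?thesis unfolding f_def using mgf[of "- \<alpha>0" j t] by simp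
      qed
      then have "ennreal (exp (- \<alpha>0 * a)) * (\<integral>\<^sup>+ \<omega>. ennreal (exp (\<alpha>0 * f \<omega>)) \<partial>M)
          \<le> ennreal (exp (- \<alpha>0 * a)) * ennreal (exp (real t * (\<alpha>0\<^sup>2 * xmax\<^sup>2 * \<sigma>\<^sup>2 / 2)))"
        by (rule mult_left_mono) simp
      also have "\<dots> = ennreal (\<delta> / (2 * real CARD('d)))"
      proof -
        have "exp (- \<alpha>0 * a) * exp (real t * (\<alpha>0\<^sup>2 * xmax\<^sup>2 * \<sigma>\<^sup>2 / 2)) = \<delta> / (2 * real CARD('d))"
          unfolding exp_add[symmetric] expo eL ..
        then show ?thesis by (simp only: ennreal_mult[symmetric] exp_ge_zero)
      qed
      finally have "ennreal (prob (Bs p)) \<le> ennreal (\<delta> / (2 * real CARD('d)))"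
        by (simp add: emeasure_eq_measure)
      then show ?thesis using delta dpos by (simp add: ennreal_le_iff)
    qed
    define B where "B = (\<Union>p\<in>UNIV. Bs p)"
    have B_sets: "B \<in> sets M" unfolding B_def using Bs_sets by auto
    have "prob B \<le> (\<Sum>p\<in>UNIV. prob (Bs p))"
      unfolding B_def by (rule finite_measure_subadditive_finite) (auto simp: Bs_sets)
    also have "\<dots> \<le> (\<Sum>p\<in>(UNIV :: ('d \<times> bool) set). \<delta> / (2 * real CARD('d)))"
      by (rule sum_mono) (rule Bs_bnd)
    also have "\<dots> = \<delta>" using dpos by (simp add: card_UNIV_bool)
    finally have pB: "prob B \<le> \<delta>" .
    show ?thesis
    proof (intro bexI[of _ "space M - B"] conjI ballI)
      show "space M - B \<in> sets M" using B_sets by auto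
      show "1 - \<delta> \<le> prob (space M - B)" using prob_compl[OF B_sets] pB by simp
      fix \<omega> assume \<omega>: "\<omega> \<in> space M - B"
      have Sb: "\<bar>\<Sum>\<tau>=1..t. \<epsilon> \<tau> \<omega> * (X \<tau> \<omega> $ j)\<bar> \<le> real t * lam'" for j
      proof -
        have "\<omega> \<notin> Bs (j, True)" "\<omega> \<notin> Bs (j, False)" using \<omega> unfolding B_def by auto
        then have "S j t \<omega> < a" "- S j t \<omega> < a" using \<omega> unfolding Bs_def by auto
        then show ?thesis unfolding S_def a_def by auto
      qed
      show "\<bar>emp_proc m \<mu> \<beta>s t (\<lambda>\<tau>. X \<tau> \<omega>) (\<lambda>\<tau>. Y \<tau> \<omega>) (\<beta>hat \<omega>)
       - emp_proc m \<mu> \<beta>s t (\<lambda>\<tau>. X \<tau> \<omega>) (\<lambda>\<tau>. Y \<tau> \<omega>) \<beta>s\<bar>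
      \<le> \<sigma> * xmax * sqrt (2 * (ln (2 / \<delta>) + ln (real CARD('d))) / real t)
         * l1norm (\<beta>hat \<omega> - \<beta>s)"
        using det_bound[where X="\<lambda>\<tau>. X \<tau> \<omega>" and Y="\<lambda>\<tau>. Y \<tau> \<omega>" and e="\<lambda>\<tau>. \<epsilon> \<tau> \<omega>" and \<mu>=\<mu>
            and \<beta>s=\<beta>s and t=t and lam=lam' and m=m and b="\<beta>hat \<omega>", OF Y_def Sb t_pos]
        unfolding lam'_def .
    qed
  qed
qed

end
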